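(* If $\pi$ is a permutation with exactly one descent, then $\mu(1,\pi)=-\mu(21,\pi)$.
   Context: A permutation of length $n$ is an arrangement of $1,\dots,n$; $1$ denotes the permutation of length one and $21$ the decreasing permutation of length two. The permutation poset is ordered by pattern containment: $\sigma\le\pi$ if $\pi$ has a subsequence in the same relative order as $\sigma$. A descent of $\pi$ is an index $i$ with $\pi_i>\pi_{i+1}$. $\mu$ is the Möbius function of this poset: $\mu(a,a)=1$, $\mu(a,b)=-\sum_{a\le z<b}\mu(a,z)$ for $a<b$, $\mu(a,b)=0$ if $a\not\le b$. *)

theory Defs
  imports Main
begin

definition is_perm :: "nat list \<Rightarrow> bool" where
  "is_perm p \<longleftrightarrow> distinct p \<and> set p = {1..length p}"

definition same_order :: "nat list \<Rightarrow> nat list \<Rightarrow> bool" where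
  "same_order xs ys \<longleftrightarrow> length xs = length ys \<and>
     (\<forall>i<length xs. \<forall>j<length xs. (xs ! i < xs ! j) \<longleftrightarrow> (ys ! i < ys ! j))"

definition pat_le :: "nat list \<Rightarrow> nat list \<Rightarrow> bool" where
  "pat_le s p \<longleftrightarrow> (\<exists>ys \<in> set (subseqs p). same_order s ys)"

definition descents :: "nat list \<Rightarrow> nat" where
  "descents p = card {i. Suc i < length p \<and> p ! i > p ! Suc i}"

text \<open>A fuel argument guarantees well-definedness; fuel length b + 1 always suffices
  since every z strictly below b is strictly shorter than b.\<close>
fun mu_fuel :: "nat \<Rightarrow> nat list \<Rightarrow> nat list \<Rightarrow> int" where
  "mu_fuel 0 a b = 0"
| "mu_fuel (Suc k) a b =
     (if a = b then 1
      else if pat_le a b then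
        - (\<Sum>z \<in> {z. is_perm z \<and> pat_le a z \<and> pat_le z b \<and> z \<noteq> b}. mu_fuel k a z)
      else 0)"

definition mu :: "nat list \<Rightarrow> nat list \<Rightarrow> int" where
  "mu a b = mu_fuel (Suc (length b)) a b"

end

theory Submission
  imports Defs "HOL-Library.Sublist"
begin


lemma subseq_idx:
  assumes "subseq ys xs"
  shows "\<exists>f. (\<forall>i j. i < j \<longrightarrow> j < length ys \<longrightarrow> f i < f j) \<and>
             (\<forall>i<length ys. f i < length xs \<and> ys ! i = xs ! (f i))"
  using assms
proof (induction rule: list_emb.induct)
  case (list_emb_Nil ys)
  then show ?case by auto
next
  case (list_emb_Cons xs ys y)
  then obtain f where f: "\<forall>i j. i < j \<longrightarrow> j < length xs \<longrightarrow> f i < f j"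
    "\<forall>i<length xs. f i < length ys \<and> xs ! i = ys ! (f i)" by blast
  show ?case by (rule exI[of _ "Suc \<circ> f"]) (use f in auto)
next
  case (list_emb_Cons2 x y xs ys)
  then obtain f where f: "\<forall>i j. i < j \<longrightarrow> j < length xs \<longrightarrow> f i < f j"
    "\<forall>i<length xs. f i < length ys \<and> xs ! i = ys ! (f i)" by blast
  define g where "g = (\<lambda>i. if i = 0 then 0 else Suc (f (i - 1)))"
  have 1: "\<forall>i j. i < j \<longrightarrow> j < length (x # xs) \<longrightarrow> g i < g j"
  proof (intro allI impI)
    fix i j assume "i < j" "j < length (x # xs)"
    then show "g i < g j"
      using f(1) unfolding g_def by (cases i; cases j) auto
  qed
  have 2: "\<forall>i<length (x # xs). g i < length (y # ys) \<and> (x # xs) ! i = (y # ys) ! g i"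
  proof (intro allI impI)
    fix i assume "i < length (x # xs)"
    then show "g i < length (y # ys) \<and> (x # xs) ! i = (y # ys) ! g i"
      using f(2) list_emb_Cons2.hyps unfolding g_def by (cases i) auto
  qed
  show ?case using 1 2 by blast
qed

lemma pat_le_idx:
  assumes "pat_le s p"
  shows "\<exists>f. (\<forall>i j. i < j \<longrightarrow> j < length s \<longrightarrow> f i < f j) \<and>
             (\<forall>i<length s. f i < length p) \<and>
             (\<forall>i<length s. \<forall>j<length s. s ! i < s ! j \<longleftrightarrow> p ! f i < p ! f j)"
proof -
  obtain ys where ys: "subseq ys p" "same_order s ys"
    using assms unfolding pat_le_def by auto
  then obtain f where f: "\<forall>i j. i < j \<longrightarrow> j < length ys \<longrightarrow> f i < f j"
             "\<forall>i<length ys. f i < length p \<and> ys ! i = p ! (f i)"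
    using subseq_idx by blast
  have l: "length ys = length s" using ys(2) unfolding same_order_def by auto
  show ?thesis
    apply (rule exI[of _ f])
    using f l ys(2) unfolding same_order_def by (metis (no_types, lifting))
qed

lemma pat_le_length: "pat_le s p \<Longrightarrow> length s \<le> length p"
  unfolding pat_le_def same_order_def by (auto dest: list_emb_length)

lemma subseq_pair: "i < j \<Longrightarrow> j < length xs \<Longrightarrow> subseq [xs ! i, xs ! j] xs"
proof (induction xs arbitrary: i j)
  case Nil then show ?case by simp
next
  case (Cons x xs)
  show ?case
  proof (cases i)
    case 0
    then have "xs ! (j - 1) \<in> set xs" using Cons.prems by (cases j) auto
    then have "subseq [xs ! (j - 1)] xs"
      by (simp add: subseq_singleton_left)
    then show ?thesis using 0 Cons.prems by (cases j) auto
  next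
    case (Suc i')
    then obtain j' where "j = Suc j'" using Cons.prems by (cases j) auto
    then have "subseq [xs ! i', xs ! j'] xs" using Suc Cons by auto
    then show ?thesis using Suc \<open>j = Suc j'\<close> by (metis list_emb_Cons nth_Cons_Suc)
  qed
qed



lemma perm_rank:
  assumes "is_perm p" "i < length p"
  shows "p ! i = card {j. j < length p \<and> p ! j \<le> p ! i}"
proof -
  have d: "distinct p" and s: "set p = {1..length p}" using assms(1) unfolding is_perm_def by auto
  have inj: "inj_on (nth p) {j. j < length p \<and> p ! j \<le> p ! i}"
    using d by (auto intro: inj_on_nth)
  have "nth p ` {j. j < length p \<and> p ! j \<le> p ! i} = {v \<in> set p. v \<le> p ! i}"
    by (auto simp: in_set_conv_nth)
  also have "\<dots> = {1..p ! i}"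
    using s assms(2) nth_mem[OF assms(2)] by auto
  finally show ?thesis using card_image[OF inj] by simp
qed

lemma perm_same_order_eq:
  assumes "is_perm p" "is_perm q" "same_order p q"
  shows "p = q"
proof (rule nth_equalityI)
  show l: "length p = length q" using assms(3) unfolding same_order_def by auto
  fix i assume i: "i < length p"
  have "{j. j < length p \<and> p ! j \<le> p ! i} = {j. j < length q \<and> q ! j \<le> q ! i}"
    using assms(3) i l unfolding same_order_def by (auto simp: not_less[symmetric])
  then show "p ! i = q ! i"
    using perm_rank[OF assms(1) i] perm_rank[OF assms(2)] i l by simp
qed

lemma pat_le_lt:
  assumes "is_perm z" "is_perm b" "pat_le z b" "z \<noteq> b"
  shows "length z < length b"
proof -
  obtain ys where ys: "subseq ys b" "same_order z ys"
    using assms(3) unfolding pat_le_def by auto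
  have l: "length ys = length z" using ys(2) unfolding same_order_def by auto
  have "length ys \<le> length b" using ys(1) by (rule list_emb_length)
  moreover have "length ys \<noteq> length b"
  proof
    assume "length ys = length b"
    then have "ys = b" using subseq_same_length ys(1) by blast
    then show False using perm_same_order_eq[OF assms(1,2)] ys(2) assms(4) by simp
  qed
  ultimately show ?thesis using l by simp
qed

lemma finite_below: "finite {z. is_perm z \<and> pat_le z b}"
proof (rule finite_subset)
  show "{z. is_perm z \<and> pat_le z b} \<subseteq> {xs. set xs \<subseteq> {0..length b} \<and> length xs \<le> length b}"
    using pat_le_length unfolding is_perm_def by fastforce
  show "finite {xs. set xs \<subseteq> {0..length b} \<and> length xs \<le> length b}"
    by (rule finite_lists_length_le) simp
qed


lemma fuel:
  "\<forall>k' b. length b < k \<longrightarrow> length b < k' \<longrightarrow> is_perm b \<longrightarrow> mu_fuel k a b = mu_fuel k' a b"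
proof (induction k)
  case 0 then show ?case by simp
next
  case (Suc m)
  show ?case
  proof (intro allI impI)
    fix k' b assume h: "length b < Suc m" "length b < k'" "is_perm b"
    then obtain m' where k': "k' = Suc m'" by (cases k') auto
    have "(\<Sum>z \<in> {z. is_perm z \<and> pat_le a z \<and> pat_le z b \<and> z \<noteq> b}. mu_fuel m a z)
        = (\<Sum>z \<in> {z. is_perm z \<and> pat_le a z \<and> pat_le z b \<and> z \<noteq> b}. mu_fuel m' a z)"
    proof (rule sum.cong)
      fix z assume "z \<in> {z. is_perm z \<and> pat_le a z \<and> pat_le z b \<and> z \<noteq> b}"
      then have "is_perm z" "length z < length b" using pat_le_lt h(3) by auto
      then show "mu_fuel m a z = mu_fuel m' a z" using Suc.IH[rule_format, of z m'] h k' by simp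
    qed simp
    then show "mu_fuel (Suc m) a b = mu_fuel k' a b" using k' by simp
  qed
qed


definition below :: "nat list \<Rightarrow> nat list \<Rightarrow> nat list set" where
  "below a b = {z. is_perm z \<and> pat_le a z \<and> pat_le z b \<and> z \<noteq> b}"

lemma finite_belowS: "finite (below a b)"
  by (rule finite_subset[OF _ finite_below[of b]]) (auto simp: below_def)

lemma mu_unfold:
  assumes "is_perm b"
  shows "mu a b = (if a = b then 1 else if pat_le a b then - (\<Sum>z \<in> below a b. mu a z) else 0)"
proof -
  have e: "(\<Sum>z \<in> below a b. mu_fuel (length b) a z) = (\<Sum>z \<in> below a b. mu a z)"
  proof (rule sum.cong)
    fix z assume "z \<in> below a b"
    then have z: "is_perm z" "pat_le z b" "z \<noteq> b" by (auto simp: below_def)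
    then have l: "length z < length b" using pat_le_lt assms by blast
    have "mu_fuel (length b) a z = mu_fuel (Suc (length z)) a z"
      using fuel[of "length b" a] l z(1) by blast
    then show "mu_fuel (length b) a z = mu a z" by (simp only: mu_def)
  qed simp
  have "mu a b = mu_fuel (Suc (length b)) a b" by (simp only: mu_def)
  also have "\<dots> = (if a = b then 1 else if pat_le a b then - (\<Sum>z \<in> below a b. mu_fuel (length b) a z) else 0)"
    by (simp only: mu_fuel.simps below_def)
  also have "\<dots> = (if a = b then 1 else if pat_le a b then - (\<Sum>z \<in> below a b. mu a z) else 0)"
    by (simp only: e)
  finally show ?thesis .
qed


definition inc :: "nat \<Rightarrow> nat list" where "inc k = [1..<Suc k]"

lemma length_inc [simp]: "length (inc k) = k" by (simp add: inc_def)
lemma nth_inc [simp]: "i < k \<Longrightarrow> inc k ! i = Suc i" by (simp add: inc_def del: upt_Suc)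
lemma perm_inc: "is_perm (inc k)" by (auto simp: inc_def is_perm_def)
lemma inc_inj: "inc j = inc k \<Longrightarrow> j = k" by (metis length_inc)

lemma sorted_perm_inc:
  assumes "is_perm w" "\<forall>i j. i < j \<longrightarrow> j < length w \<longrightarrow> w ! i < w ! j"
  shows "w = inc (length w)"
proof -
  have sw: "sorted_wrt (<) w" using assms(2) by (simp add: sorted_wrt_iff_nth_less)
  have st: "set w = {1..<Suc (length w)}" using assms(1) unfolding is_perm_def by auto
  have "length w = card {1..<Suc (length w)}" by simp
  then have "sorted_list_of_set {1..<Suc (length w)} = w"
    using sorted_list_of_set_unique[of "{1..<Suc (length w)}" w] sw st by simp
  then show ?thesis unfolding inc_def by simp
qed

lemma same_order_21: "b < a \<Longrightarrow> same_order [2, 1] [a, b]"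
  unfolding same_order_def by (auto simp: less_Suc_eq nth_Cons')

lemma same_order_12: "a < b \<Longrightarrow> same_order [1, 2] [a, b]"
  unfolding same_order_def by (auto simp: less_Suc_eq nth_Cons')

lemma pat_le_21I: "i < j \<Longrightarrow> j < length xs \<Longrightarrow> xs ! j < xs ! i \<Longrightarrow> pat_le [2, 1] xs"
  unfolding pat_le_def in_set_subseqs
  by (rule bexI[of _ "[xs ! i, xs ! j]"]) (use same_order_21[of "xs ! j" "xs ! i"] subseq_pair[of i j xs] in auto)

lemma pat_le_12I: "i < j \<Longrightarrow> j < length xs \<Longrightarrow> xs ! i < xs ! j \<Longrightarrow> pat_le [1, 2] xs"
  unfolding pat_le_def in_set_subseqs
  by (rule bexI[of _ "[xs ! i, xs ! j]"]) (use same_order_12[of "xs ! i" "xs ! j"] subseq_pair[of i j xs] in auto)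

lemma pat_le_1I: "xs \<noteq> [] \<Longrightarrow> pat_le [1] xs"
proof -
  assume "xs \<noteq> []"
  then have "subseq [hd xs] xs" by (simp add: subseq_singleton_left)
  moreover have "same_order [1] [hd xs]" by (simp add: same_order_def)
  ultimately show ?thesis unfolding pat_le_def by auto
qed

lemma pat_le_21D:
  assumes "pat_le [2, 1] xs"
  shows "\<exists>i j. i < j \<and> j < length xs \<and> xs ! j < xs ! i"
proof -
  obtain f where f: "\<forall>i j. i < j \<longrightarrow> j < length [2::nat, 1] \<longrightarrow> f i < f j"
     "\<forall>i<length [2::nat, 1]. f i < length xs"
     "\<forall>i<length [2::nat, 1]. \<forall>j<length [2::nat, 1]. [2::nat, 1] ! i < [2, 1] ! j \<longleftrightarrow> xs ! f i < xs ! f j"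
    using pat_le_idx[OF assms] by blast
  have "f 0 < f 1" "f 1 < length xs" "xs ! f 1 < xs ! f 0"
    using f(1)[rule_format, of 0 1] f(2)[rule_format, of 1] f(3)[rule_format, of 1 0] by auto
  then show ?thesis by blast
qed

lemma no21_inc:
  assumes "is_perm w" "\<not> pat_le [2, 1] w"
  shows "w = inc (length w)"
proof (rule sorted_perm_inc[OF assms(1)], intro allI impI)
  fix i j assume ij: "i < j" "j < length w"
  have "w ! i \<noteq> w ! j" using assms(1) ij unfolding is_perm_def by (simp add: nth_eq_iff_index_eq)
  moreover have "\<not> w ! j < w ! i" using pat_le_21I[OF ij] assms(2) by blast
  ultimately show "w ! i < w ! j" by simp
qed

lemma pat_le_inc_sorted:
  assumes "pat_le w (inc k)"
  shows "\<forall>i j. i < j \<longrightarrow> j < length w \<longrightarrow> w ! i < w ! j"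
proof -
  obtain f where f: "\<forall>i j. i < j \<longrightarrow> j < length w \<longrightarrow> f i < f j"
     "\<forall>i<length w. f i < length (inc k)"
     "\<forall>i<length w. \<forall>j<length w. w ! i < w ! j \<longleftrightarrow> inc k ! f i < inc k ! f j"
    using pat_le_idx[OF assms] by blast
  show ?thesis
  proof (intro allI impI)
    fix i j assume "i < j" "j < length w"
    then show "w ! i < w ! j" using f(1)[rule_format, of i j] f(2) f(3)[rule_format, of i j] by auto
  qed
qed

lemma pat_le_inc_inc: "j \<le> k \<Longrightarrow> pat_le (inc j) (inc k)"
proof -
  assume "j \<le> k"
  then have "inc k = inc j @ [Suc j..<Suc k]" unfolding inc_def
    using upt_add_eq_append[of 1 "Suc j" "k - j"] by (simp del: upt_Suc)
  then have "subseq (inc j) (inc k)" by (metis prefixI prefix_imp_subseq)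
  moreover have "same_order (inc j) (inc j)" by (simp add: same_order_def)
  ultimately show ?thesis unfolding pat_le_def by auto
qed

lemma below_inc: "below [1] (inc k) = inc ` {1..<k}"
proof
  show "below [1] (inc k) \<subseteq> inc ` {1..<k}"
  proof
    fix w assume "w \<in> below [1] (inc k)"
    then have w: "is_perm w" "pat_le [1] w" "pat_le w (inc k)" "w \<noteq> inc k" by (auto simp: below_def)
    have e: "w = inc (length w)" using sorted_perm_inc[OF w(1) pat_le_inc_sorted[OF w(3)]] .
    have "length w < k" using pat_le_lt[OF w(1) perm_inc w(3) w(4)] by simp
    moreover have "1 \<le> length w" using pat_le_length[OF w(2)] by simp
    ultimately show "w \<in> inc ` {1..<k}" using e by auto
  qed
next
  show "inc ` {1..<k} \<subseteq> below [1] (inc k)"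
  proof
    fix w assume "w \<in> inc ` {1..<k}"
    then obtain j where j: "1 \<le> j" "j < k" "w = inc j" by auto
    have "inc j \<noteq> []" using j by (simp add: inc_def del: upt_Suc)
    moreover have "inc j \<noteq> inc k" using j inc_inj by auto
    ultimately show "w \<in> below [1] (inc k)" unfolding below_def
      using j perm_inc[of j] pat_le_1I[of "inc j"] pat_le_inc_inc[of j k] by simp
  qed
qed

definition hh :: "nat \<Rightarrow> int" where "hh j = (if j = 1 then 1 else if j = 2 then -1 else 0)"

lemma sum_hh: "2 \<le> k \<Longrightarrow> (\<Sum>j \<in> {1..<k}. hh j) = (if k = 2 then 1 else 0)"
proof (induction k)
  case 0 then show ?case by simp
next
  case (Suc k)
  show ?case
  proof (cases "k = 1")
    case True then show ?thesis by (simp add: hh_def)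
  next
    case False
    then have "2 \<le> k" using Suc.prems by simp
    then show ?thesis using Suc.IH by (auto simp: hh_def)
  qed
qed

lemma mu_inc: "1 \<le> k \<Longrightarrow> mu [1] (inc k) = hh k"
proof (induction k rule: less_induct)
  case (less k)
  show ?case
  proof (cases "k = 1")
    case True then show ?thesis by (simp add: mu_def inc_def hh_def)
  next
    case False
    then have k2: "2 \<le> k" using less.prems by simp
    have ne: "[1] \<noteq> inc k"
    proof
      assume "[1] = inc k"
      then have "length [1::nat] = k" by (metis length_inc)
      then show False using k2 by simp
    qed
    have "inc k \<noteq> []" using k2 by (simp add: inc_def del: upt_Suc)
    then have pl: "pat_le [1] (inc k)" by (rule pat_le_1I)
    have "mu [1] (inc k) = - (\<Sum>w \<in> inc ` {1..<k}. mu [1] w)"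
      using mu_unfold[OF perm_inc, of "[1]" k] ne pl below_inc by simp
    also have "\<dots> = - (\<Sum>j \<in> {1..<k}. mu [1] (inc j))"
      by (subst sum.reindex) (auto simp: inj_on_def dest: inc_inj)
    also have "\<dots> = - (\<Sum>j \<in> {1..<k}. hh j)"
      using less.IH by (intro arg_cong[where f=uminus] sum.cong) auto
    also have "\<dots> = hh k" using sum_hh[OF k2] k2 by (simp add: hh_def)
    finally show ?thesis .
  qed
qed



definition dec3 :: "nat list \<Rightarrow> bool" where
  "dec3 xs \<longleftrightarrow> (\<exists>i j k. i < j \<and> j < k \<and> k < length xs \<and> xs ! j < xs ! i \<and> xs ! k < xs ! j)"

lemma dec3_mono:
  assumes "pat_le w z" "dec3 w"
  shows "dec3 z"
proof -
  obtain f where f: "\<forall>i j. i < j \<longrightarrow> j < length w \<longrightarrow> f i < f j"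
     "\<forall>i<length w. f i < length z"
     "\<forall>i<length w. \<forall>j<length w. w ! i < w ! j \<longleftrightarrow> z ! f i < z ! f j"
    using pat_le_idx[OF assms(1)] by blast
  obtain i j k where ijk: "i < j" "j < k" "k < length w" "w ! j < w ! i" "w ! k < w ! j"
    using assms(2) unfolding dec3_def by blast
  have "f i < f j" "f j < f k" "f k < length z" "z ! f j < z ! f i" "z ! f k < z ! f j"
    using ijk f(1)[rule_format, of i j] f(1)[rule_format, of j k] f(2)[rule_format, of k]
      f(3)[rule_format, of j i] f(3)[rule_format, of k j] by auto
  then show ?thesis unfolding dec3_def by blast
qed

lemma perm_len2:
  assumes "is_perm z" "length z = 2" "z ! 1 < z ! 0"
  shows "z = [2, 1]"
proof -
  obtain a b where z: "z = [a, b]" using assms(2)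
    by (auto simp: length_Suc_conv numeral_2_eq_2)
  have st: "set z = {1..length z}" using assms(1) unfolding is_perm_def by simp
  have "a \<in> set z" "b \<in> set z" by (simp_all add: z)
  then have "a \<le> 2" "1 \<le> b" using st assms(2) by auto
  moreover have "b < a" using assms(3) z by simp
  ultimately have "a = 2" "b = 1" by linarith+
  then show ?thesis using z by simp
qed

lemma asc_pair:
  assumes "is_perm z" "3 \<le> length z" "\<not> dec3 z"
  shows "pat_le [1, 2] z"
proof -
  have d: "distinct z" using assms(1) unfolding is_perm_def by simp
  have dc: "\<forall>i<length z. \<forall>j<length z. i \<noteq> j \<longrightarrow> z ! i \<noteq> z ! j"
    using d distinct_conv_nth by blast
  have zne: "z \<noteq> []" using assms(2) by auto
  have n01: "z ! 0 \<noteq> z ! 1" using dc[rule_format, of 0 1] assms(2) zne by simp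
  have n12: "z ! 1 \<noteq> z ! 2" using dc[rule_format, of 1 2] assms(2) by simp
  show ?thesis
  proof (cases "z ! 0 < z ! 1")
    case True then show ?thesis using pat_le_12I[of 0 1 z] assms(2) by simp
  next
    case False
    show ?thesis
    proof (cases "z ! 1 < z ! 2")
      case True then show ?thesis using pat_le_12I[of 1 2 z] assms(2) by simp
    next
      case False2: False
      have "z ! 1 < z ! 0" "z ! 2 < z ! 1" using False False2 n01 n12 by auto
      then have "dec3 z" unfolding dec3_def using assms(2)
        by (intro exI[of _ 0] exI[of _ 1] exI[of _ 2]) simp
      then show ?thesis using assms(3) by simp
    qed
  qed
qed

lemma not_21_12: "\<not> pat_le [2, 1] [1, 2]"
proof
  assume "pat_le [2, 1] [1::nat, 2]"
  then obtain i j where "i < j" "j < length [1::nat, 2]" "[1::nat, 2] ! j < [1, 2] ! i"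
    using pat_le_21D by blast
  then show False by (cases i; cases j) auto
qed

lemma mu_1_1: "mu [1] [1] = 1" by (simp add: mu_def)

lemma below_21_ne: "w \<in> below [2, 1] z \<Longrightarrow> w \<in> below [1] z"
proof -
  assume h: "w \<in> below [2, 1] z"
  then have "pat_le [2, 1] w" by (simp add: below_def)
  then have "w \<noteq> []" using pat_le_length[of "[2, 1]" w] by auto
  then have "pat_le [1] w" by (rule pat_le_1I)
  then show ?thesis using h by (simp add: below_def)
qed

lemma main:
  assumes "is_perm z" "pat_le [2, 1] z" "\<not> dec3 z"
  shows "mu [1] z = - mu [2, 1] z"
  using assms
proof (induction "length z" arbitrary: z rule: less_induct)
  case less
  have len2: "2 \<le> length z" using pat_le_length[OF less.prems(2)] by simp
  have z_ne: "z \<noteq> []" "z \<noteq> [1]" using len2 by auto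
  let ?S1 = "below [1] z" and ?S2 = "below [2, 1] z"
  let ?A = "?S1 - ?S2"
  have sub: "?S2 \<subseteq> ?S1" using below_21_ne by blast
  have fin: "finite ?S1" by (rule finite_belowS)
  have mu1: "mu [1] z = - (\<Sum>w \<in> ?S1. mu [1] w)"
    using mu_unfold[OF less.prems(1), of "[1]"] z_ne pat_le_1I by simp
  have split: "(\<Sum>w \<in> ?S1. mu [1] w) = (\<Sum>w \<in> ?S2. mu [1] w) + (\<Sum>w \<in> ?A. mu [1] w)"
    using sum.subset_diff[OF sub fin, of "mu [1]"] by (simp add: add.commute)
  have Aelem: "\<And>w. w \<in> ?A \<Longrightarrow> w = inc (length w) \<and> 1 \<le> length w"
  proof -
    fix w assume "w \<in> ?A"
    then have "is_perm w" "\<not> pat_le [2, 1] w" "pat_le [1] w" by (auto simp: below_def)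
    then show "w = inc (length w) \<and> 1 \<le> length w" using no21_inc pat_le_length[of "[1]" w] by simp
  qed
  have inc1: "inc 1 = [1]" by (simp add: inc_def)
  have inc2: "inc 2 = [1, 2]" by (simp add: inc_def numeral_2_eq_2)
  have one_in: "[1] \<in> ?A"
  proof -
    have "\<not> pat_le [2, 1] [1::nat]"
    proof
      assume "pat_le [2, 1] [1::nat]"
      from pat_le_length[OF this] show False by simp
    qed
    moreover have "is_perm [1]" using perm_inc[of 1] inc1 by simp
    ultimately show ?thesis using z_ne pat_le_1I[of z] pat_le_1I[of "[1]"] by (auto simp: below_def)
  qed
  show ?case
  proof (cases "z = [2, 1]")
    case True
    have S2e: "?S2 = {}"
    proof -
      { fix w assume "w \<in> ?S2"
        then have h: "is_perm w" "pat_le [2, 1] w" "pat_le w z" "w \<noteq> z" by (auto simp: below_def)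
        have "length w < length z" using pat_le_lt[OF h(1) less.prems(1) h(3,4)] .
        moreover have "2 \<le> length w" using pat_le_length[OF h(2)] by simp
        ultimately have False using True by simp }
      then show ?thesis by blast
    qed
    have Ae: "?A = {[1]}"
    proof
      show "{[1]} \<subseteq> ?A" using one_in by simp
      show "?A \<subseteq> {[1]}"
      proof
        fix w assume w: "w \<in> ?A"
        then have h: "is_perm w" "pat_le w z" "w \<noteq> z" by (auto simp: below_def)
        have "length w < length z" using pat_le_lt[OF h(1) less.prems(1) h(2,3)] .
        then have "length w = 1" using Aelem[OF w] True by simp
        then show "w \<in> {[1]}" using Aelem[OF w] inc1 by simp
      qed
    qed
    have "mu [1] z = -1" using mu1 split S2e Ae mu_1_1 by simp
    moreover have "mu [2, 1] z = 1" using True by (simp add: mu_def)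
    ultimately show ?thesis by simp
  next
    case False
    have len3: "3 \<le> length z"
    proof (rule ccontr)
      assume "\<not> 3 \<le> length z"
      then have l2: "length z = 2" using len2 by simp
      obtain i j where ij: "i < j" "j < length z" "z ! j < z ! i" using pat_le_21D[OF less.prems(2)] by blast
      then have "i = 0" "j = 1" using l2 by auto
      then have "z = [2, 1]" using perm_len2[OF less.prems(1) l2] ij by simp
      then show False using False by simp
    qed
    have p12: "pat_le [1, 2] z" using asc_pair[OF less.prems(1) len3 less.prems(3)] .
    have two_in: "[1, 2] \<in> ?A"
    proof -
      have "is_perm [1, 2]" using perm_inc[of 2] inc2 by simp
      moreover have "[1, 2] \<noteq> z" using len3 by auto
      moreover have "pat_le [1] [1::nat, 2]" using pat_le_1I by simp
      ultimately show ?thesis using p12 not_21_12 by (auto simp: below_def)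
    qed
    have sumA: "(\<Sum>w \<in> ?A. mu [1] w) = 0"
    proof -
      have "(\<Sum>w \<in> ?A. mu [1] w) = (\<Sum>w \<in> {[1], [1, 2]}. mu [1] w)"
      proof (rule sum.mono_neutral_right)
        show "finite ?A" using fin by simp
        show "{[1], [1, 2]} \<subseteq> ?A" using one_in two_in by simp
        show "\<forall>w \<in> ?A - {[1], [1, 2]}. mu [1] w = 0"
        proof
          fix w assume w: "w \<in> ?A - {[1], [1, 2]}"
          then have e: "w = inc (length w)" "1 \<le> length w" using Aelem by auto
          have "length w \<noteq> 1"
          proof
            assume "length w = 1"
            then have "w = [1]" using e(1) inc1 by simp
            then show False using w by simp
          qed
          moreover have "length w \<noteq> 2"
          proof
            assume "length w = 2"
            then have "w = [1, 2]" using e(1) inc2 by simp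
            then show False using w by simp
          qed
          ultimately have "hh (length w) = 0" by (simp add: hh_def)
          then show "mu [1] w = 0" using mu_inc[OF e(2)] e(1) by simp
        qed
      qed
      also have "\<dots> = mu [1] (inc 1) + mu [1] (inc 2)" using inc1 inc2 by simp
      also have "\<dots> = 0" using mu_inc[of 1] mu_inc[of 2] by (simp add: hh_def)
      finally show ?thesis .
    qed
    have sumS2: "(\<Sum>w \<in> ?S2. mu [1] w) = (\<Sum>w \<in> ?S2. - mu [2, 1] w)"
    proof (rule sum.cong)
      fix w assume w: "w \<in> ?S2"
      then have h: "is_perm w" "pat_le [2, 1] w" "pat_le w z" "w \<noteq> z" by (auto simp: below_def)
      have nd: "\<not> dec3 w" using dec3_mono[OF h(3)] less.prems(3) by blast
      have l: "length w < length z" using pat_le_lt[OF h(1) less.prems(1) h(3,4)] .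
      show "mu [1] w = - mu [2, 1] w" using less.hyps[OF l h(1) h(2) nd] .
    qed simp
    have mu21: "mu [2, 1] z = - (\<Sum>w \<in> ?S2. mu [2, 1] w)"
      using mu_unfold[OF less.prems(1), of "[2, 1]"] False less.prems(2) by (simp add: eq_commute)
    show ?thesis using mu1 split sumA sumS2 mu21 by (simp add: sum_negf)
  qed
qed

lemma desc_between:
  fixes xs :: "nat list"
  shows "i < j \<Longrightarrow> j < length xs \<Longrightarrow> xs ! j < xs ! i \<Longrightarrow> \<exists>d. i \<le> d \<and> d < j \<and> xs ! Suc d < xs ! d"
proof (induction j)
  case 0 then show ?case by simp
next
  case (Suc j)
  show ?case
  proof (cases "xs ! Suc j < xs ! j")
    case True then show ?thesis using Suc.prems by (intro exI[of _ j]) auto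
  next
    case False
    have "i \<noteq> j"
    proof
      assume "i = j"
      then show False using False Suc.prems(3) by simp
    qed
    then have "i < j" using Suc.prems(1) by simp
    moreover have "xs ! j < xs ! i" using False Suc.prems(3) by (meson le_less_trans not_less)
    ultimately obtain d where "i \<le> d" "d < j" "xs ! Suc d < xs ! d" using Suc.IH Suc.prems by auto
    then show ?thesis by (intro exI[of _ d]) simp
  qed
qed

theorem mainTheorem9:
  assumes "is_perm \<pi>" and "descents \<pi> = 1"
  shows "mu [1] \<pi> = - mu [2, 1] \<pi>"
proof -
  let ?D = "{i. Suc i < length \<pi> \<and> \<pi> ! i > \<pi> ! Suc i}"
  obtain d0 where D: "?D = {d0}" using assms(2) unfolding descents_def by (rule card_1_singletonE)
  then have "Suc d0 < length \<pi>" "\<pi> ! Suc d0 < \<pi> ! d0" by auto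
  then have p21: "pat_le [2, 1] \<pi>" using pat_le_21I[of d0 "Suc d0" \<pi>] by simp
  have nd: "\<not> dec3 \<pi>"
  proof
    assume "dec3 \<pi>"
    then obtain i j k where ijk: "i < j" "j < k" "k < length \<pi>" "\<pi> ! j < \<pi> ! i" "\<pi> ! k < \<pi> ! j"
      unfolding dec3_def by blast
    obtain d1 where d1: "i \<le> d1" "d1 < j" "\<pi> ! Suc d1 < \<pi> ! d1" using desc_between[of i j \<pi>] ijk by auto
    obtain d2 where d2: "j \<le> d2" "d2 < k" "\<pi> ! Suc d2 < \<pi> ! d2" using desc_between[of j k \<pi>] ijk by auto
    have "d1 \<in> ?D" "d2 \<in> ?D" using d1 d2 ijk by auto
    then have "d1 = d2" using D by auto
    then show False using d1 d2 by simp
  qed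
  show ?thesis using main[OF assms(1) p21 nd] .
qed

end
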